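(* Suppose that the modal operator $\bullet$ occurs neither in any type of the typing context $\Gamma$ nor in the type expression $A$ (note that $\top=\mu X.\bullet X$ contains $\bullet$). If $\Gamma\vdash M:A$ is derivable in $\lambda$A, then $M$ is $\beta$-normalizable.
   Context: Type expressions: fix a countably infinite set of type variables $X,Y,Z,\dots$. Pseudo type expressions are generated by $A::=X\mid A\to A\mid \bullet A\mid \mu X.A$ ($\mu$ binds $X$; $\alpha$-convertible expressions are identified; $\to$ associates to the right; $\bullet$ binds tighter than $\to$, which binds tighter than $\mu$). $A[B/X]$ denotes capture-avoiding substitution. $\top$ abbreviates $\mu X.\bullet X$, and $\bullet^n A$ denotes $A$ prefixed by $n$ copies of $\bullet$. The tail $t(A)$ is defined by $t(X)=X$, $t(A\to B)=t(B)$, $t(\bullet A)=\bullet t(A)$, $t(\mu X.A)=\mu X.t(A)$; it always has the form $\bullet^{m_0}\mu X_1.\bullet^{m_1}\mu X_2.\cdots\mu X_n.\bullet^{m_n}Y$. $A$ is a $\top$-variant iff $Y=X_i$ for some $1\le i\le n$ with $X_i\notin\{X_{i+1},\dots,X_n\}$ and $m_i+\dots+m_n\ge 1$. $A$ is proper in $X$ iff: a variable $Y$ is proper in $X$ iff $Y\neq X$; $\bullet A$ is always proper in $X$; $A\to B$ is proper in $X$ iff both $A,B$ are proper in $X$ or $B$ is a $\top$-variant; for $Y\ne X$, $\mu Y.A$ is proper in $X$ iff $A$ is proper in $X$ or $\mu Y.A$ is a $\top$-variant. Type expressions are the least set of pseudo type expressions containing all type variables, closed under $\to$ and $\bullet$,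 and containing $\mu X.A$ whenever it contains $A$ and $A$ is proper in $X$. Equality: $\cong$ is the least relation on type expressions such that: $A\cong A$; $A\cong B$ implies $B\cong A$; $A\cong B$ and $B\cong C$ imply $A\cong C$; $A\cong B$ implies $\bullet A\cong\bullet B$; $A\cong C$ and $B\cong D$ imply $A\to B\cong C\to D$; $A\to\top\cong\top$; $\mu X.A\cong A[\mu X.A/X]$; and if $A\cong C[A/X]$ with $C$ proper in $X$, then $A\cong\mu X.C$. $\simeq$ is the least relation satisfying the same closure conditions and additionally $\bullet(A\to B)\simeq\bullet A\to\bullet B$. Subtyping: a subtyping assumption $\gamma$ is a finite set of pairs $X\preceq Y$ of type variables in which each type variable occurs at most once; $FTV(\gamma)$ is the set of variables occurring in it. Judgments $\gamma\vdash A\preceq B$ are derived by the rules: $\gamma\cup\{X\preceq Y\}\vdash X\preceq Y$; $\gamma\vdash A\preceq\top$; from $A\simeq B$ infer $\gamma\vdash A\preceq B$; from $\gamma_1\vdash A\preceq B$ and $\gamma_2\vdash B\preceq C$ infer $\gamma_1\cup\gamma_2\vdash A\preceq C$; from $\gamma\vdash A\preceq B$ infer $\gamma\vdash\bullet A\preceq\bullet B$; from $\gamma_1\vdash A'\preceq A$ and $\gamma_2\vdash B\preceq B'$ infer $\gamma_1\cup\gamma_2\vdash A\to B\preceq A'\to B'$; from $\gamma\cup\{X\preceq Y\}\vdash A\preceq B$ infer $\gamma\vdash\mu X.A\preceq\mu Y.B$, provided $X\notin FTV(\gamma)\cup FTV(B)$, $Y\notin FTV(\gamma)\cup FTV(A)$,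 $A$ is proper in $X$ and $B$ is proper in $Y$; and $\gamma\vdash A\preceq\bullet A$. All sets $\gamma\cup\{X\preceq Y\}$, $\gamma_1\cup\gamma_2$ must be well-formed subtyping assumptions. $A\preceq B$ means $\{\}\vdash A\preceq B$ is derivable. Typing system $\lambda$A: untyped $\lambda$-terms $M::=x\mid\lambda x.M\mid MM$ (identified up to $\alpha$-conversion). A typing context $\Gamma$ is a finite map from individual variables to type expressions, written $\{x_1:A_1,\dots,x_n:A_n\}$; $\bullet\Gamma$ is $\{x_1:\bullet A_1,\dots,x_n:\bullet A_n\}$; unions of contexts must be well-formed (a variable receives at most one type). Rules: (var) $\Gamma\cup\{x:A\}\vdash x:A$; (shift) from $\bullet\Gamma\vdash M:\bullet A$ infer $\Gamma\vdash M:A$; ($\top$) $\Gamma\vdash M:\top$; ($\preceq$) from $\Gamma\vdash M:A$ and $A\preceq B$ infer $\Gamma\vdash M:B$; ($\to$I) from $\Gamma\cup\{x:A\}\vdash M:B$ infer $\Gamma\vdash\lambda x.M:A\to B$; ($\to$E) from $\Gamma_1\vdash M:A\to B$ and $\Gamma_2\vdash N:A$ infer $\Gamma_1\cup\Gamma_2\vdash MN:B$. *)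

theory Defs
  imports Main
begin

text \<open>Free type variables are named by natural numbers (TV X); variables bound by
  mu are de Bruijn indices (TB i). Alpha-convertible expressions are thus identical.\<close>

datatype ty = TV nat | TB nat | Arr ty ty | Lat ty | Mu ty

definition top :: ty where "top = Mu (Lat (TB 0))"

fun fv :: "ty \<Rightarrow> nat set" where
  "fv (TV X) = {X}"
| "fv (TB i) = {}"
| "fv (Arr A B) = fv A \<union> fv B"
| "fv (Lat A) = fv A"
| "fv (Mu A) = fv A"

text \<open>Opening: substitute U for the bound variable with index k (U locally closed).\<close>
fun open_rec :: "nat \<Rightarrow> ty \<Rightarrow> ty \<Rightarrow> ty" where
  "open_rec k U (TV X) = TV X"
| "open_rec k U (TB i) = (if i = k then U else TB i)"
| "open_rec k U (Arr A B) = Arr (open_rec k U A) (open_rec k U B)"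
| "open_rec k U (Lat A) = Lat (open_rec k U A)"
| "open_rec k U (Mu A) = Mu (open_rec (Suc k) U A)"

definition open_ty :: "ty \<Rightarrow> ty \<Rightarrow> ty" where
  "open_ty A U = open_rec 0 U A"

fun tail :: "ty \<Rightarrow> ty" where
  "tail (TV X) = TV X"
| "tail (TB i) = TB i"
| "tail (Arr A B) = tail B"
| "tail (Lat A) = Lat (tail A)"
| "tail (Mu A) = Mu (tail A)"

text \<open>The list bs records, for every mu binder passed so far
  (innermost first, i.e. indexed by de Bruijn index), whether at least one bullet occurs
  after that binder. The final variable must be bound by one of the binders of the tail
  (a de Bruijn index pointing to it, which automatically means it is not shadowed) and at
  least one bullet must occur after that binder.\<close>
fun tv_aux :: "bool list \<Rightarrow> ty \<Rightarrow> bool" where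
  "tv_aux bs (TV X) = False"
| "tv_aux bs (TB i) = (i < length bs \<and> bs ! i)"
| "tv_aux bs (Arr A B) = False"
| "tv_aux bs (Lat A) = tv_aux (map (\<lambda>_. True) bs) A"
| "tv_aux bs (Mu A) = tv_aux (False # bs) A"

definition top_variant :: "ty \<Rightarrow> bool" where
  "top_variant A = tv_aux [] (tail A)"

fun proper :: "nat \<Rightarrow> ty \<Rightarrow> bool" where
  "proper k (TV Y) = True"
| "proper k (TB i) = (i \<noteq> k)"
| "proper k (Lat A) = True"
| "proper k (Arr A B) = ((proper k A \<and> proper k B) \<or> top_variant B)"
| "proper k (Mu A) = (proper (Suc k) A \<or> top_variant (Mu A))"

text \<open>Type expressions: texk k A means A is a type expression in which the dangling
  indices below k (variables bound further out) are treated as type variables.\<close>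
inductive texk :: "nat \<Rightarrow> ty \<Rightarrow> bool" where
  "texk k (TV X)"
| "i < k \<Longrightarrow> texk k (TB i)"
| "texk k A \<Longrightarrow> texk k B \<Longrightarrow> texk k (Arr A B)"
| "texk k A \<Longrightarrow> texk k (Lat A)"
| "texk (Suc k) A \<Longrightarrow> proper 0 A \<Longrightarrow> texk k (Mu A)"

definition texp :: "ty \<Rightarrow> bool" where
  "texp A = texk 0 A"

text \<open>teq False is the relation \<cong>, teq True is the relation \<simeq>
  (with the extra rule distributing bullet over arrow).\<close>
inductive teq :: "bool \<Rightarrow> ty \<Rightarrow> ty \<Rightarrow> bool" for e :: bool where
  refl: "texp A \<Longrightarrow> teq e A A"
| sym: "teq e A B \<Longrightarrow> teq e B A"
| trans: "teq e A B \<Longrightarrow> teq e B C \<Longrightarrow> teq e A C"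
| lat: "teq e A B \<Longrightarrow> teq e (Lat A) (Lat B)"
| arr: "teq e A C \<Longrightarrow> teq e B D \<Longrightarrow> teq e (Arr A B) (Arr C D)"
| arr_top: "texp A \<Longrightarrow> teq e (Arr A top) top"
| unfold: "texp (Mu A) \<Longrightarrow> teq e (Mu A) (open_ty A (Mu A))"
| fixpt: "texp A \<Longrightarrow> texp (Mu C) \<Longrightarrow> teq e A (open_ty C A) \<Longrightarrow> teq e A (Mu C)"
| dist: "e \<Longrightarrow> texp A \<Longrightarrow> texp B \<Longrightarrow> teq e (Lat (Arr A B)) (Arr (Lat A) (Lat B))"

abbreviation cong_ty :: "ty \<Rightarrow> ty \<Rightarrow> bool" where "cong_ty \<equiv> teq False"
abbreviation simeq_ty :: "ty \<Rightarrow> ty \<Rightarrow> bool" where "simeq_ty \<equiv> teq True"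

definition FTV :: "(nat \<times> nat) set \<Rightarrow> nat set" where
  "FTV g = fst ` g \<union> snd ` g"

definition wf_assm :: "(nat \<times> nat) set \<Rightarrow> bool" where
  "wf_assm g \<longleftrightarrow> finite g \<and> (\<forall>(X,Y)\<in>g. X \<noteq> Y) \<and>
     (\<forall>p\<in>g. \<forall>q\<in>g. p \<noteq> q \<longrightarrow> {fst p, snd p} \<inter> {fst q, snd q} = {})"

inductive sub :: "(nat \<times> nat) set \<Rightarrow> ty \<Rightarrow> ty \<Rightarrow> bool" where
  hyp: "wf_assm (g \<union> {(X,Y)}) \<Longrightarrow> sub (g \<union> {(X,Y)}) (TV X) (TV Y)"
| top: "wf_assm g \<Longrightarrow> texp A \<Longrightarrow> sub g A top"
| eq: "wf_assm g \<Longrightarrow> simeq_ty A B \<Longrightarrow> sub g A B"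
| trans: "sub g1 A B \<Longrightarrow> sub g2 B C \<Longrightarrow> wf_assm (g1 \<union> g2) \<Longrightarrow> sub (g1 \<union> g2) A C"
| lat: "sub g A B \<Longrightarrow> sub g (Lat A) (Lat B)"
| arr: "sub g1 A' A \<Longrightarrow> sub g2 B B' \<Longrightarrow> wf_assm (g1 \<union> g2) \<Longrightarrow>
         sub (g1 \<union> g2) (Arr A B) (Arr A' B')"
| mu: "sub (g \<union> {(X,Y)}) (open_ty A (TV X)) (open_ty B (TV Y)) \<Longrightarrow>
       wf_assm (g \<union> {(X,Y)}) \<Longrightarrow>
       X \<notin> fv (Mu A) \<Longrightarrow> Y \<notin> fv (Mu B) \<Longrightarrow>
       X \<notin> FTV g \<union> fv (open_ty B (TV Y)) \<Longrightarrow>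
       Y \<notin> FTV g \<union> fv (open_ty A (TV X)) \<Longrightarrow>
       proper 0 A \<Longrightarrow> proper 0 B \<Longrightarrow>
       sub g (Mu A) (Mu B)"
| later: "wf_assm g \<Longrightarrow> texp A \<Longrightarrow> sub g A (Lat A)"

definition subtype :: "ty \<Rightarrow> ty \<Rightarrow> bool" where
  "subtype A B = sub {} A B"

datatype tm = Var nat | Lam tm | App tm tm

fun lift :: "tm \<Rightarrow> nat \<Rightarrow> tm" where
  "lift (Var i) k = (if i < k then Var i else Var (Suc i))"
| "lift (Lam t) k = Lam (lift t (Suc k))"
| "lift (App s t) k = App (lift s k) (lift t k)"

fun subst :: "tm \<Rightarrow> tm \<Rightarrow> nat \<Rightarrow> tm" where
  "subst (Var i) s k = (if k < i then Var (i - 1) else if i = k then s else Var i)"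
| "subst (Lam t) s k = Lam (subst t (lift s 0) (Suc k))"
| "subst (App t u) s k = App (subst t s k) (subst u s k)"

inductive beta :: "tm \<Rightarrow> tm \<Rightarrow> bool" where
  "beta (App (Lam s) t) (subst s t 0)"
| "beta s t \<Longrightarrow> beta (App s u) (App t u)"
| "beta s t \<Longrightarrow> beta (App u s) (App u t)"
| "beta s t \<Longrightarrow> beta (Lam s) (Lam t)"

definition beta_normal :: "tm \<Rightarrow> bool" where
  "beta_normal M \<longleftrightarrow> \<not> (\<exists>N. beta M N)"

definition beta_normalizable :: "tm \<Rightarrow> bool" where
  "beta_normalizable M \<longleftrightarrow> (\<exists>N. beta\<^sup>*\<^sup>* M N \<and> beta_normal N)"

definition ctx_ok :: "(nat \<rightharpoonup> ty) \<Rightarrow> bool" where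
  "ctx_ok G \<longleftrightarrow> finite (dom G) \<and> (\<forall>A\<in>ran G. texp A)"

definition ctx_later :: "(nat \<rightharpoonup> ty) \<Rightarrow> (nat \<rightharpoonup> ty)" where
  "ctx_later G = (\<lambda>x. map_option Lat (G x))"

definition ctx_ext :: "ty \<Rightarrow> (nat \<rightharpoonup> ty) \<Rightarrow> (nat \<rightharpoonup> ty)" where
  "ctx_ext A G = (\<lambda>x. case x of 0 \<Rightarrow> Some A | Suc y \<Rightarrow> G y)"

text \<open>Union of two contexts is well-formed iff they agree on common variables.\<close>
definition compat :: "(nat \<rightharpoonup> ty) \<Rightarrow> (nat \<rightharpoonup> ty) \<Rightarrow> bool" where
  "compat G1 G2 \<longleftrightarrow> (\<forall>x\<in>dom G1 \<inter> dom G2. G1 x = G2 x)"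

inductive typing :: "(nat \<rightharpoonup> ty) \<Rightarrow> tm \<Rightarrow> ty \<Rightarrow> bool" where
  var: "ctx_ok G \<Longrightarrow> G x = Some A \<Longrightarrow> typing G (Var x) A"
| shift: "typing (ctx_later G) M (Lat A) \<Longrightarrow> typing G M A"
| top: "ctx_ok G \<Longrightarrow> typing G M top"
| sub: "typing G M A \<Longrightarrow> subtype A B \<Longrightarrow> typing G M B"
| arrI: "typing (ctx_ext A G) M B \<Longrightarrow> typing G (Lam M) (Arr A B)"
| arrE: "typing G1 M (Arr A B) \<Longrightarrow> typing G2 N A \<Longrightarrow> compat G1 G2 \<Longrightarrow>
          typing (G1 ++ G2) (App M N) B"

fun bullet_free :: "ty \<Rightarrow> bool" where
  "bullet_free (TV X) = True"
| "bullet_free (TB i) = True"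
| "bullet_free (Arr A B) = (bullet_free A \<and> bullet_free B)"
| "bullet_free (Lat A) = False"
| "bullet_free (Mu A) = bullet_free A"

end

theory Submission
  imports Defs
begin


definition upr :: "(nat \<Rightarrow> nat) \<Rightarrow> nat \<Rightarrow> nat" where
  "upr f = (\<lambda>i. case i of 0 \<Rightarrow> 0 | Suc j \<Rightarrow> Suc (f j))"

fun ren :: "(nat \<Rightarrow> nat) \<Rightarrow> tm \<Rightarrow> tm" where
  "ren f (Var i) = Var (f i)"
| "ren f (Lam t) = Lam (ren (upr f) t)"
| "ren f (App s t) = App (ren f s) (ren f t)"

definition up :: "(nat \<Rightarrow> tm) \<Rightarrow> nat \<Rightarrow> tm" where
  "up s = (\<lambda>i. case i of 0 \<Rightarrow> Var 0 | Suc j \<Rightarrow> ren Suc (s j))"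

fun psubst :: "(nat \<Rightarrow> tm) \<Rightarrow> tm \<Rightarrow> tm" where
  "psubst s (Var i) = s i"
| "psubst s (Lam t) = Lam (psubst (up s) t)"
| "psubst s (App a b) = App (psubst s a) (psubst s b)"

lemma ren_ren: "ren f (ren g t) = ren (f \<circ> g) t"
proof (induction t arbitrary: f g)
  case (Lam t)
  have "(\<lambda>a. upr f (upr g a)) = upr (\<lambda>a. f (g a))" by (auto simp: upr_def split: nat.splits)
  then show ?case using Lam by simp
qed auto

lemma psubst_ren: "psubst s (ren f t) = psubst (s \<circ> f) t"
proof (induction t arbitrary: s f)
  case (Lam t)
  have "(\<lambda>a. up s (upr f a)) = up (\<lambda>a. s (f a))" by (auto simp: upr_def up_def split: nat.splits)
  then show ?case using Lam by simp
qed auto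

lemma ren_psubst: "ren f (psubst s t) = psubst (ren f \<circ> s) t"
proof (induction t arbitrary: s f)
  case (Lam t)
  have "(\<lambda>a. ren (upr f) (up s a)) = up (\<lambda>a. ren f (s a))"
  proof
    fix i show "ren (upr f) (up s i) = up (\<lambda>a. ren f (s a)) i"
      by (cases i) (auto simp: up_def ren_ren comp_def upr_def)
  qed
  then show ?case using Lam by simp
qed auto

lemma psubst_psubst: "psubst s (psubst r t) = psubst (psubst s \<circ> r) t"
proof (induction t arbitrary: s r)
  case (Lam t)
  have "(\<lambda>a. psubst (up s) (up r a)) = up (\<lambda>a. psubst s (r a))"
  proof
    fix i show "psubst (up s) (up r i) = up (\<lambda>a. psubst s (r a)) i"
      by (cases i) (auto simp: up_def psubst_ren ren_psubst intro!: arg_cong2[where f=psubst])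
  qed
  then show ?case using Lam by simp
qed auto

lemma up_Var: "up Var = Var" by (auto simp: up_def split: nat.splits)

lemma psubst_Var: "psubst Var t = t"
  by (induction t) (auto simp: up_Var)

definition liftf :: "nat \<Rightarrow> nat \<Rightarrow> nat" where
  "liftf k i = (if i < k then i else Suc i)"

lemma lift_ren: "lift t k = ren (liftf k) t"
proof (induction t arbitrary: k)
  case (Lam t)
  have "upr (liftf k) = liftf (Suc k)" by (auto simp: upr_def liftf_def split: nat.splits)
  then show ?case using Lam by simp
qed (auto simp: liftf_def)

lemma liftf0: "liftf 0 = Suc" by (auto simp: liftf_def)

definition ss :: "nat \<Rightarrow> tm \<Rightarrow> nat \<Rightarrow> tm" where
  "ss k u i = (if k < i then Var (i - 1) else if i = k then u else Var i)"

lemma subst_psubst: "subst t u k = psubst (ss k u) t"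
proof (induction t arbitrary: k u)
  case (Lam t)
  have "up (ss k u) = ss (Suc k) (lift u 0)"
  proof
    fix i show "up (ss k u) i = ss (Suc k) (lift u 0) i"
      by (cases i) (auto simp: up_def ss_def lift_ren liftf0)
  qed
  then show ?case using Lam by simp
qed (auto simp: ss_def)

definition scons :: "tm \<Rightarrow> (nat \<Rightarrow> tm) \<Rightarrow> nat \<Rightarrow> tm" where
  "scons u s = (\<lambda>i. case i of 0 \<Rightarrow> u | Suc j \<Rightarrow> s j)"

lemma subst_up: "subst (psubst (up s) M) N 0 = psubst (scons N s) M"
proof -
  have "psubst (ss 0 N) \<circ> up s = scons N s"
  proof
    fix i show "(psubst (ss 0 N) \<circ> up s) i = scons N s i"
      by (cases i) (auto simp: up_def ss_def scons_def psubst_ren comp_def psubst_Var[unfolded comp_def]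
          cong: if_cong)
  qed
  then show ?thesis by (simp add: subst_psubst psubst_psubst)
qed



fun fvs :: "tm \<Rightarrow> nat set" where
  "fvs (Var i) = {i}"
| "fvs (Lam t) = {i. Suc i \<in> fvs t}"
| "fvs (App s t) = fvs s \<union> fvs t"

lemma finite_fvs: "finite (fvs t)"
proof (induction t)
  case (Lam t)
  have e: "fvs (Lam t) = Suc -` fvs t" by auto
  show "finite (fvs (Lam t))" unfolding e by (rule finite_vimageI[OF Lam inj_Suc])
qed auto

lemma fvs_ren: "fvs (ren f t) = f ` fvs t"
proof (induction t arbitrary: f)
  case (Lam t)
  have 1: "i \<in> f ` {i. Suc i \<in> fvs t}" if "Suc i \<in> upr f ` fvs t" for i
  proof -
    from that obtain j where "j \<in> fvs t" "Suc i = upr f j" by auto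
    then show ?thesis by (cases j) (auto simp: upr_def)
  qed
  have 2: "Suc (f j) \<in> upr f ` fvs t" if "Suc j \<in> fvs t" for j
    using that by (force simp: upr_def)
  show ?case using 1 2 Lam.IH[of "upr f"] by auto
next
  case (App a b) then show ?case by (simp add: image_Un)
qed simp

lemma fvs_psubst: "fvs (psubst s t) \<subseteq> (\<Union>i\<in>fvs t. fvs (s i))"
proof (induction t arbitrary: s)
  case (Lam t)
  show ?case
  proof
    fix i assume "i \<in> fvs (psubst s (Lam t))"
    then have "Suc i \<in> fvs (psubst (up s) t)" by simp
    with Lam obtain j where j: "j \<in> fvs t" "Suc i \<in> fvs (up s j)" by blast
    then obtain j' where "j = Suc j'" by (cases j) (auto simp: up_def)
    with j show "i \<in> (\<Union>i\<in>fvs (Lam t). fvs (s i))" by (auto simp: up_def fvs_ren)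
  qed
next
  case (App a b)
  show ?case using App.IH[of s] by fastforce
qed simp

lemma ren_cong: "(\<And>i. i \<in> fvs t \<Longrightarrow> f i = g i) \<Longrightarrow> ren f t = ren g t"
proof (induction t arbitrary: f g)
  case (Lam t)
  have "upr f i = upr g i" if "i \<in> fvs t" for i
  proof (cases i)
    case (Suc j)
    then have "j \<in> fvs (Lam t)" using that by simp
    then show ?thesis using Lam(2) Suc by (simp add: upr_def)
  qed (simp add: upr_def)
  then show ?case using Lam(1)[of "upr f" "upr g"] by simp
next
  case (App a b)
  then show ?case by (metis UnCI fvs.simps(3) ren.simps(3))
qed simp

lemma ren_psubst_Var: "ren f t = psubst (Var \<circ> f) t"
  using psubst_ren[of Var f t] by (simp add: psubst_Var)

lemma ren_id: "ren (\<lambda>i. i) t = t"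
  using ren_psubst_Var[of "\<lambda>i. i" t] by (simp add: psubst_Var comp_def)

inductive_cases beta_VarE: "beta (Var i) t"
inductive_cases beta_LamE: "beta (Lam s) t"
inductive_cases beta_AppE: "beta (App s u) t"

lemma ren_subst0: "ren f (subst s t 0) = subst (ren (upr f) s) (ren f t) 0"
proof -
  have "(\<lambda>a. ren f (ss 0 t a)) = (\<lambda>a. ss 0 (ren f t) (upr f a))"
  proof
    fix a show "ren f (ss 0 t a) = ss 0 (ren f t) (upr f a)"
      by (cases a) (auto simp: ss_def upr_def)
  qed
  then show ?thesis by (simp add: subst_psubst ren_psubst psubst_ren comp_def)
qed

lemma beta_ren: "beta s t \<Longrightarrow> beta (ren f s) (ren f t)"
proof (induction arbitrary: f rule: beta.induct)
  case (1 s t)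
  then show ?case by (simp add: ren_subst0 beta.intros)
next
  case (2 s t u) then show ?case by (simp add: beta.intros)
next
  case (3 s t u) then show ?case by (simp add: beta.intros)
next
  case (4 s t) then show ?case by (simp add: beta.intros)
qed

lemma beta_fvs: "beta s t \<Longrightarrow> fvs t \<subseteq> fvs s"
proof (induction rule: beta.induct)
  case (1 s t)
  have "fvs (subst s t 0) \<subseteq> (\<Union>i\<in>fvs s. fvs (ss 0 t i))"
    by (simp add: subst_psubst fvs_psubst)
  also have "\<dots> \<subseteq> fvs (App (Lam s) t)"
  proof
    fix x assume "x \<in> (\<Union>i\<in>fvs s. fvs (ss 0 t i))"
    then obtain i where "i \<in> fvs s" "x \<in> fvs (ss 0 t i)" by auto
    then show "x \<in> fvs (App (Lam s) t)" by (cases i) (auto simp: ss_def)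
  qed
  finally show ?case .
qed auto

lemma normal_ren_aux: "beta (ren f N) Q \<Longrightarrow> \<exists>N'. beta N N'"
proof (induction N arbitrary: f Q)
  case (Var x)
  then show ?case by (auto elim: beta_VarE)
next
  case (Lam t)
  from Lam.prems obtain t' where "beta (ren (upr f) t) t'" by (auto elim: beta_LamE)
  then obtain N' where "beta t N'" using Lam.IH by blast
  then show ?case by (blast intro: beta.intros(4))
next
  case (App a b)
  have "beta (App (ren f a) (ren f b)) Q" using App.prems by simp
  then consider (h) "\<exists>s'. ren f a = Lam s'" | (l) "\<exists>t. beta (ren f a) t" | (r) "\<exists>t. beta (ren f b) t"
    by (cases rule: beta_AppE) blast+
  then show ?case
  proof cases
    case h then show ?thesis by (cases a) (auto intro: beta.intros(1))
  next
    case l then show ?thesis using App.IH(1) by (blast intro: beta.intros(2))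
  next
    case r then show ?thesis using App.IH(2) by (blast intro: beta.intros(3))
  qed
qed

lemma normal_ren: "beta_normal N \<Longrightarrow> beta_normal (ren f N)"
  unfolding beta_normal_def using normal_ren_aux by blast

abbreviation WN where "WN \<equiv> beta_normalizable"

lemma star_ren: "beta\<^sup>*\<^sup>* s t \<Longrightarrow> beta\<^sup>*\<^sup>* (ren f s) (ren f t)"
  by (induction rule: rtranclp_induct) (auto intro: rtranclp.rtrancl_into_rtrancl beta_ren)

lemma WN_ren: "WN t \<Longrightarrow> WN (ren f t)"
  unfolding beta_normalizable_def using star_ren normal_ren by blast

lemma WN_exp: "beta M M' \<Longrightarrow> WN M' \<Longrightarrow> WN M"
  unfolding beta_normalizable_def by (meson converse_rtranclp_into_rtranclp)

lemma star_Lam: "beta\<^sup>*\<^sup>* s t \<Longrightarrow> beta\<^sup>*\<^sup>* (Lam s) (Lam t)"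
  by (induction rule: rtranclp_induct) (auto intro: rtranclp.rtrancl_into_rtrancl beta.intros)

lemma star_AppL: "beta\<^sup>*\<^sup>* s t \<Longrightarrow> beta\<^sup>*\<^sup>* (App s u) (App t u)"
  by (induction rule: rtranclp_induct) (auto intro: rtranclp.rtrancl_into_rtrancl beta.intros)

lemma star_AppR: "beta\<^sup>*\<^sup>* s t \<Longrightarrow> beta\<^sup>*\<^sup>* (App u s) (App u t)"
  by (induction rule: rtranclp_induct) (auto intro: rtranclp.rtrancl_into_rtrancl beta.intros)

lemma normal_Lam: "beta_normal t \<Longrightarrow> beta_normal (Lam t)"
  unfolding beta_normal_def by (auto elim: beta_LamE)

lemma WN_Lam: "WN t \<Longrightarrow> WN (Lam t)"
  unfolding beta_normalizable_def using star_Lam normal_Lam by blast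

lemma subst_Var_ren: "subst M0 (Var x) 0 = ren (\<lambda>i. case i of 0 \<Rightarrow> x | Suc j \<Rightarrow> j) M0"
proof -
  have "ss 0 (Var x) = Var \<circ> (\<lambda>i. case i of 0 \<Rightarrow> x | Suc j \<Rightarrow> j)"
    by (auto simp: ss_def split: nat.splits)
  then show ?thesis by (simp add: subst_psubst ren_psubst_Var)
qed

lemma WN_fresh_aux:
  assumes "beta\<^sup>*\<^sup>* P N" "beta_normal N"
  shows "P = App M (Var x) \<Longrightarrow> x \<notin> fvs M \<Longrightarrow> WN M"
  using assms(1)
proof (induction arbitrary: M rule: converse_rtranclp_induct)
  case base
  have "beta_normal M"
    using assms(2) base unfolding beta_normal_def by (auto intro: beta.intros)
  then show ?case unfolding beta_normalizable_def by blast
next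
  case (step P P')
  have "beta (App M (Var x)) P'" using step.hyps(1) step.prems(1) by simp
  then consider (h) M0 where "M = Lam M0" "P' = subst M0 (Var x) 0"
    | (l) M' where "P' = App M' (Var x)" "beta M M'"
    | (r) t where "beta (Var x) t"
    by (cases rule: beta_AppE) blast+
  then show ?case
  proof cases
    case (h M0)
    note 1 = h
    have "WN P'" using step.hyps(2) assms(2) unfolding beta_normalizable_def by blast
    define g where "g = (\<lambda>i. if i = x then 0 else Suc i)"
    have "ren g P' = ren (g \<circ> (\<lambda>i. case i of 0 \<Rightarrow> x | Suc j \<Rightarrow> j)) M0"
      using 1 by (simp add: subst_Var_ren ren_ren)
    also have "\<dots> = ren (\<lambda>i. i) M0"
    proof (rule ren_cong)
      fix i assume "i \<in> fvs M0"
      then show "(g \<circ> (\<lambda>i. case i of 0 \<Rightarrow> x | Suc j \<Rightarrow> j)) i = i"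
        using step.prems(2) 1 by (cases i) (auto simp: g_def)
    qed
    finally have "WN M0" using WN_ren[OF \<open>WN P'\<close>, of g] by (simp add: ren_id)
    then show ?thesis using 1 WN_Lam by simp
  next
    case (l M')
    have "x \<notin> fvs M'" using beta_fvs[OF l(2)] step.prems(2) by auto
    then have "WN M'" using step.IH l by simp
    then show ?thesis using WN_exp l by blast
  next
    case (r t) then show ?thesis by (auto elim: beta_VarE)
  qed
qed

lemma WN_fresh: assumes "WN (App M (Var x))" "x \<notin> fvs M" shows "WN M"
proof -
  obtain N where "beta\<^sup>*\<^sup>* (App M (Var x)) N" "beta_normal N"
    using assms(1) unfolding beta_normalizable_def by blast
  then show ?thesis using WN_fresh_aux assms(2) by blast
qed

inductive NEU :: "tm \<Rightarrow> bool" where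
  "NEU (Var x)"
| "NEU s \<Longrightarrow> WN t \<Longrightarrow> NEU (App s t)"

inductive NN :: "tm \<Rightarrow> bool" where
  "NN (Var x)"
| "NN s \<Longrightarrow> beta_normal t \<Longrightarrow> NN (App s t)"

lemma NN_normal: "NN s \<Longrightarrow> beta_normal s"
proof (induction rule: NN.induct)
  case (1 x) then show ?case unfolding beta_normal_def by (auto elim: beta_VarE)
next
  case (2 s t)
  show ?case unfolding beta_normal_def
  proof
    assume "\<exists>N. beta (App s t) N"
    then obtain N where "beta (App s t) N" by blast
    then show False
      by (cases rule: beta_AppE) (use 2 in \<open>auto simp: beta_normal_def elim: NN.cases\<close>)
  qed
qed

lemma NEU_NN: "NEU s \<Longrightarrow> \<exists>s'. beta\<^sup>*\<^sup>* s s' \<and> NN s'"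
proof (induction rule: NEU.induct)
  case (1 x) then show ?case by (auto intro: NN.intros)
next
  case (2 s t)
  then obtain s' t' where "beta\<^sup>*\<^sup>* s s'" "NN s'" "beta\<^sup>*\<^sup>* t t'" "beta_normal t'"
    unfolding beta_normalizable_def by blast
  then show ?case
    by (meson NN.intros(2) rtranclp_trans star_AppL star_AppR)
qed

lemma NEU_WN: "NEU s \<Longrightarrow> WN s"
  unfolding beta_normalizable_def using NEU_NN NN_normal by blast



inductive_cases texk_TB: "texk k (TB i)"
inductive_cases texk_Arr: "texk k (Arr A B)"
inductive_cases texk_Lat: "texk k (Lat A)"
inductive_cases texk_Mu: "texk k (Mu A)"

lemma texk_mono: "texk k A \<Longrightarrow> k \<le> k' \<Longrightarrow> texk k' A"
proof (induction arbitrary: k' rule: texk.induct)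
  case (5 k A) then show ?case by (auto intro: texk.intros)
qed (auto intro: texk.intros)

lemma texk_proper: "texk k U \<Longrightarrow> k \<le> m \<Longrightarrow> proper m U"
  by (induction arbitrary: m rule: texk.induct) auto

lemma tv_open1: "tv_aux bs (tail B) \<Longrightarrow> length bs \<le> j \<Longrightarrow> tv_aux bs (tail (open_rec j U B))"
  by (induction B arbitrary: bs j) auto

lemma tv_open2: "tv_aux bs (tail (open_rec j (TV X) B)) \<Longrightarrow> tv_aux bs (tail B)"
  by (induction B arbitrary: bs j) (auto split: if_splits)

lemma proper_open1: "proper m A \<Longrightarrow> j \<noteq> m \<Longrightarrow> texk 0 U \<Longrightarrow> proper m (open_rec j U A)"
proof (induction A arbitrary: m j)
  case (TB i) then show ?case using texk_proper by auto
next
  case (Arr A B) then show ?case using tv_open1[of "[]" B j U] by (auto simp: top_variant_def)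
next
  case (Mu A)
  then show ?case using tv_open1[of "[False]" A "Suc j" U] by (auto simp: top_variant_def)
qed auto

lemma proper_open2: "proper m (open_rec j (TV X) A) \<Longrightarrow> j \<noteq> m \<Longrightarrow> proper m A"
proof (induction A arbitrary: m j)
  case (TB i) then show ?case by (auto split: if_splits)
next
  case (Arr A B) then show ?case using tv_open2[of "[]" j X B] by (auto simp: top_variant_def)
next
  case (Mu A)
  then show ?case using tv_open2[of "[False]" "Suc j" X A] by (auto simp: top_variant_def)
qed auto

lemma texk_open1: "texk (Suc k) A \<Longrightarrow> texk 0 U \<Longrightarrow> texk k (open_rec k U A)"
proof (induction A arbitrary: k)
  case (TB i)
  then show ?case using texk_mono by (auto elim!: texk_TB intro: texk.intros)
next
  case (Arr A B) then show ?case by (auto elim!: texk_Arr intro: texk.intros)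
next
  case (Lat A) then show ?case by (auto elim!: texk_Lat intro: texk.intros)
next
  case (Mu A)
  from Mu.prems(1) have "texk (Suc (Suc k)) A" "proper 0 A" by (auto elim: texk_Mu)
  then show ?case using Mu proper_open1[of 0 A "Suc k" U] by (auto intro: texk.intros)
qed (auto intro: texk.intros)

lemma texk_open2: "texk k (open_rec k (TV X) A) \<Longrightarrow> texk (Suc k) A"
proof (induction A arbitrary: k)
  case (TB i)
  then show ?case by (auto elim!: texk_TB intro: texk.intros split: if_splits)
next
  case (Arr A B) then show ?case by (auto elim!: texk_Arr intro: texk.intros)
next
  case (Lat A) then show ?case by (auto elim!: texk_Lat intro: texk.intros)
next
  case (Mu A)
  from Mu.prems(1) have "texk (Suc k) (open_rec (Suc k) (TV X) A)" "proper 0 (open_rec (Suc k) (TV X) A)"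
    by (auto elim: texk_Mu)
  then show ?case using Mu proper_open2[of 0 "Suc k" X A] by (auto intro: texk.intros)
qed (auto intro: texk.intros)

lemma texp_top: "texp top"
  unfolding texp_def top_def by (auto intro!: texk.intros)

lemma teq_texp: "teq e A B \<Longrightarrow> texp A \<and> texp B"
proof (induction rule: teq.induct)
  case (lat A B) then show ?case by (auto simp: texp_def intro: texk.intros)
next
  case (arr A C B D) then show ?case by (auto simp: texp_def intro: texk.intros)
next
  case (arr_top A) then show ?case using texp_top by (auto simp: texp_def intro: texk.intros)
next
  case (unfold A)
  then have "texk 1 A" by (auto simp: texp_def elim: texk_Mu)
  then show ?case using unfold texk_open1[of 0 A "Mu A"] by (auto simp: texp_def open_ty_def)
next
  case (dist A B) then show ?case by (auto simp: texp_def intro!: texk.intros)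
qed auto

lemma sub_texp: "sub g A B \<Longrightarrow> texp A \<and> texp B"
proof (induction rule: sub.induct)
  case (hyp g X Y) then show ?case by (auto simp: texp_def intro: texk.intros)
next
  case (top g A) then show ?case using texp_top by auto
next
  case (eq g A B) then show ?case using teq_texp by auto
next
  case (lat g A B) then show ?case by (auto simp: texp_def intro: texk.intros)
next
  case (arr g1 A' A g2 B B') then show ?case by (auto simp: texp_def intro: texk.intros)
next
  case (mu g X Y A B)
  then have "texk 1 A" "texk 1 B" using texk_open2[of 0 X A] texk_open2[of 0 Y B]
    by (auto simp: texp_def open_ty_def)
  then show ?case using mu by (auto simp: texp_def intro: texk.intros)
next
  case (later g A) then show ?case by (auto simp: texp_def intro: texk.intros)
qed auto

lemma typing_texp: "typing G M A \<Longrightarrow> ctx_ok G \<and> texp A"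
proof (induction rule: typing.induct)
  case (var G x A) then show ?case unfolding ctx_ok_def by (meson ranI)
next
  case (shift G M A)
  have "ctx_ok G"
  proof -
    have "dom (ctx_later G) = dom G" by (auto simp: ctx_later_def)
    moreover have "texp B" if "B \<in> ran G" for B
    proof -
      from that obtain x where "G x = Some B" by (auto simp: ran_def)
      then have "Lat B \<in> ran (ctx_later G)" by (auto simp: ctx_later_def ran_def)
      then have "texp (Lat B)" using shift by (auto simp: ctx_ok_def)
      then show ?thesis by (auto simp: texp_def elim: texk_Lat)
    qed
    ultimately show ?thesis using shift by (auto simp: ctx_ok_def)
  qed
  moreover have "texp A" using shift.IH unfolding texp_def by (blast elim: texk_Lat)
  ultimately show ?case by blast
next
  case (top G M) then show ?case using texp_top by auto
next
  case (sub G M A B) then show ?case using sub_texp unfolding subtype_def by blast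
next
  case (arrI A G M B)
  have o: "ctx_ok (ctx_ext A G)" using arrI by auto
  have "dom G \<subseteq> (\<lambda>x. x - 1) ` dom (ctx_ext A G)"
  proof
    fix x assume "x \<in> dom G"
    then have "Suc x \<in> dom (ctx_ext A G)" by (auto simp: ctx_ext_def)
    then show "x \<in> (\<lambda>x. x - 1) ` dom (ctx_ext A G)" by force
  qed
  then have "finite (dom G)" using o by (meson ctx_ok_def finite_imageI finite_subset)
  moreover have "texp B" if "B \<in> ran G" for B
  proof -
    from that obtain x where "G x = Some B" by (auto simp: ran_def)
    then have "B \<in> ran (ctx_ext A G)" by (auto simp: ctx_ext_def ran_def intro: exI[of _ "Suc x"])
    then show ?thesis using o by (auto simp: ctx_ok_def)
  qed
  moreover have "texp A"
  proof -
    have "A \<in> ran (ctx_ext A G)" by (auto simp: ctx_ext_def ran_def intro: exI[of _ 0])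
    then show ?thesis using o by (auto simp: ctx_ok_def)
  qed
  moreover have "texp B" using arrI.IH by blast
  ultimately show ?case unfolding ctx_ok_def texp_def by (blast intro: texk.intros)
next
  case (arrE G1 M A B G2 N)
  have "ran (G1 ++ G2) \<subseteq> ran G1 \<union> ran G2"
    by (auto simp: ran_def map_add_def split: option.splits)
  then have "ctx_ok (G1 ++ G2)" using arrE by (auto simp: ctx_ok_def)
  moreover have "texp B" using arrE.IH(1) unfolding texp_def by (blast elim: texk_Arr)
  ultimately show ?case by blast
qed

lemma bf_tail: "bullet_free A \<Longrightarrow> bullet_free (tail A)"
  by (induction A) simp_all

lemma bf_tv: "bullet_free T \<Longrightarrow> (\<forall>b\<in>set bs. \<not> b) \<Longrightarrow> \<not> tv_aux bs T"
proof (induction T arbitrary: bs)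
  case (TB i) then show ?case using nth_mem by fastforce
next
  case (Mu T) then show ?case by simp
qed simp_all

lemma bf_not_tv: "bullet_free B \<Longrightarrow> \<not> top_variant B"
  unfolding top_variant_def using bf_tail bf_tv by auto



type_synonym sem = "nat \<Rightarrow> tm set"

definition latS :: "sem \<Rightarrow> sem" where
  "latS S n = (case n of 0 \<Rightarrow> UNIV | Suc m \<Rightarrow> S m)"

definition arrS :: "sem \<Rightarrow> sem \<Rightarrow> sem" where
  "arrS S T n = {M. \<forall>k\<le>n. \<forall>N\<in>S k. App M N \<in> T k}"

definition UU :: sem where "UU = (\<lambda>_. UNIV)"

definition fixp :: "(sem \<Rightarrow> sem) \<Rightarrow> sem" where
  "fixp F n = (F ^^ Suc n) UU n"

fun interp :: "ty \<Rightarrow> (nat \<Rightarrow> sem) \<Rightarrow> sem list \<Rightarrow> sem" where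
  "interp (TV X) r b = r X"
| "interp (TB i) r b = (if i < length b then b ! i else UU)"
| "interp (Arr A B) r b = arrS (interp A r b) (interp B r b)"
| "interp (Lat A) r b = latS (interp A r b)"
| "interp (Mu A) r b = fixp (\<lambda>S. interp A r (S # b))"

definition agree :: "nat \<Rightarrow> sem \<Rightarrow> sem \<Rightarrow> bool" where
  "agree n S T \<longleftrightarrow> (\<forall>k<n. S k = T k)"

definition contractive :: "(sem \<Rightarrow> sem) \<Rightarrow> bool" where
  "contractive F \<longleftrightarrow> (\<forall>n S T. agree n S T \<longrightarrow> agree (Suc n) (F S) (F T))"

lemma agree_refl[simp]: "agree n S S" by (simp add: agree_def)
lemma agree_trans: "agree n S T \<Longrightarrow> agree n T R \<Longrightarrow> agree n S R" by (simp add: agree_def)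
lemma agree_sym: "agree n S T \<Longrightarrow> agree n T S" by (simp add: agree_def)
lemma agree_mono: "agree n S T \<Longrightarrow> m \<le> n \<Longrightarrow> agree m S T" by (simp add: agree_def)

lemma contrD: "contractive F \<Longrightarrow> agree n S T \<Longrightarrow> agree (Suc n) (F S) (F T)"
  unfolding contractive_def by blast

lemma it_agree:
  assumes "contractive F"
  shows "agree j ((F ^^ j) UU) ((F ^^ (j + m)) UU)"
proof (induction j)
  case 0 show ?case by (simp add: agree_def)
next
  case (Suc j)
  have "agree (Suc j) (F ((F ^^ j) UU)) (F ((F ^^ (j + m)) UU))"
    by (rule contrD[OF assms Suc])
  then show ?case by simp
qed

lemma fixp_agree_it:
  assumes "contractive F"
  shows "agree n (fixp F) ((F ^^ n) UU)"
  unfolding agree_def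
proof (intro allI impI)
  fix k assume "k < n"
  then obtain m where m: "n = Suc k + m" using less_imp_Suc_add by fastforce
  have "agree (Suc k) ((F ^^ Suc k) UU) ((F ^^ (Suc k + m)) UU)" by (rule it_agree[OF assms])
  then have "(F ^^ Suc k) UU k = (F ^^ (Suc k + m)) UU k" unfolding agree_def by blast
  then have "(F ^^ Suc k) UU k = (F ^^ n) UU k" using m by simp
  then show "fixp F k = (F ^^ n) UU k" unfolding fixp_def .
qed

lemma fixp_eq:
  assumes "contractive F"
  shows "F (fixp F) = fixp F"
proof
  fix n
  have "agree (Suc n) (F (fixp F)) (F ((F ^^ n) UU))"
    by (rule contrD[OF assms fixp_agree_it[OF assms]])
  then have "F (fixp F) n = F ((F ^^ n) UU) n" unfolding agree_def by blast
  also have "\<dots> = fixp F n" unfolding fixp_def by simp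
  finally show "F (fixp F) n = fixp F n" .
qed

lemma fixp_unique:
  assumes "contractive F" "F S = S"
  shows "S = fixp F"
proof -
  have "agree n S (fixp F)" for n
  proof (induction n)
    case 0 show ?case by (simp add: agree_def)
  next
    case (Suc n)
    have "agree (Suc n) (F S) (F (fixp F))" by (rule contrD[OF assms(1) Suc])
    then show ?case unfolding assms(2) fixp_eq[OF assms(1)] .
  qed
  then show ?thesis unfolding agree_def by blast
qed

lemma fixp_UU: "F UU = UU \<Longrightarrow> fixp F = UU"
proof -
  assume a: "F UU = UU"
  have it: "(F ^^ j) UU = UU" for j by (induction j) (simp_all add: a)
  show ?thesis
  proof
    fix n show "fixp F n = UU n" unfolding fixp_def using it[of "Suc n"] by simp
  qed
qed

lemma fixp_const: "(\<And>S. F S = F W) \<Longrightarrow> fixp F = F W"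
proof -
  assume a: "\<And>S. F S = F W"
  have "(F ^^ Suc n) UU = F W" for n using a[of "(F ^^ n) UU"] by simp
  then show ?thesis unfolding fixp_def by auto
qed

lemma latS_UU[simp]: "latS UU = UU" by (auto simp: latS_def UU_def split: nat.splits)
lemma arrS_UU[simp]: "arrS S UU = UU" by (auto simp: arrS_def UU_def)

lemma interp_top: "interp top r b = UU"
  by (simp add: top_def fixp_UU)

section \<open>Non-expansiveness\<close>

lemma arrS_agree:
  "agree n S S' \<Longrightarrow> agree n T T' \<Longrightarrow> agree n (arrS S T) (arrS S' T')"
  unfolding agree_def arrS_def by auto

lemma latS_agree: "agree n S S' \<Longrightarrow> agree (Suc n) (latS S) (latS S')"
  unfolding agree_def latS_def by (auto split: nat.splits)

lemma fixp_agree: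
  assumes "\<And>S S'. agree n S S' \<Longrightarrow> agree n (F S) (F' S')"
  shows "agree n (fixp F) (fixp F')"
proof -
  have "agree n ((F ^^ j) UU) ((F' ^^ j) UU)" for j
    by (induction j) (simp_all add: assms)
  then show ?thesis unfolding agree_def fixp_def by blast
qed

lemma interp_ne:
  "(\<And>X. agree n (r X) (r' X)) \<Longrightarrow> length b = length b' \<Longrightarrow>
   (\<And>i. i < length b \<Longrightarrow> agree n (b ! i) (b' ! i)) \<Longrightarrow>
   agree n (interp A r b) (interp A r' b')"
proof (induction A arbitrary: b b')
  case (Lat A)
  then have "agree n (interp A r b) (interp A r' b')" by blast
  then have "agree (Suc n) (interp (Lat A) r b) (interp (Lat A) r' b')" using latS_agree by simp
  then show ?case using agree_mono by (meson le_SucI order_refl)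
next
  case (Mu A)
  show ?case unfolding interp.simps
  proof (rule fixp_agree)
    fix S S' assume "agree n S S'"
    then show "agree n (interp A r (S # b)) (interp A r' (S' # b'))"
      using Mu.prems by (intro Mu.IH) (auto simp: nth_Cons split: nat.splits)
  qed
qed (auto simp: arrS_agree)

section \<open>Top variants\<close>

lemma interp_tv:
  "tv_aux bs (tail A) \<Longrightarrow> length bs \<le> length b \<Longrightarrow> (\<And>i. i < length bs \<Longrightarrow> b ! i = UU) \<Longrightarrow>
   interp A r b = UU"
proof (induction A arbitrary: bs b)
  case (TB i) then show ?case by auto
next
  case (Arr A B) then show ?case by auto
next
  case (Lat A)
  then have "interp A r b = UU" by (intro Lat.IH[of "map (\<lambda>_. True) bs"]) auto
  then show ?case by simp
next
  case (Mu A)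
  have "interp A r (UU # b) = UU"
    using Mu.prems by (intro Mu.IH[of "False # bs"]) (auto simp: nth_Cons split: nat.splits)
  then show ?case by (simp add: fixp_UU)
qed simp

lemma interp_top_variant: "top_variant A \<Longrightarrow> interp A r b = UU"
  unfolding top_variant_def using interp_tv[of "[]"] by auto

section \<open>Contractiveness\<close>

lemma interp_contr:
  "proper k A \<Longrightarrow> length b' = length b \<Longrightarrow> (\<And>i. i < length b \<Longrightarrow> i \<noteq> k \<Longrightarrow> b ! i = b' ! i) \<Longrightarrow>
   (k < length b \<Longrightarrow> agree n (b ! k) (b' ! k)) \<Longrightarrow>
   agree (Suc n) (interp A r b) (interp A r b')"
proof (induction A arbitrary: k b b' n)
  case (TB i) then show ?case by auto
next
  case (Lat A)
  have "agree n (interp A r b) (interp A r b')"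
    using Lat.prems by (intro interp_ne) (auto, metis agree_refl)
  then show ?case using latS_agree by simp
next
  case (Arr A B)
  show ?case
  proof (cases "top_variant B")
    case True then show ?thesis using interp_top_variant by simp
  next
    case False
    then have "proper k A" "proper k B" using Arr.prems by auto
    then show ?thesis using Arr by (simp add: arrS_agree)
  qed
next
  case (Mu A)
  show ?case
  proof (cases "top_variant (Mu A)")
    case True then show ?thesis using interp_top_variant by (metis agree_refl)
  next
    case False
    then have pA: "proper (Suc k) A" using Mu.prems by auto
    show ?thesis unfolding interp.simps
    proof (rule fixp_agree)
      fix S S' assume SS: "agree (Suc n) S S'"
      have 1: "agree (Suc n) (interp A r (S # b)) (interp A r (S' # b))"
        using SS by (intro interp_ne) (auto simp: nth_Cons split: nat.splits)
      have 2: "agree (Suc n) (interp A r (S' # b)) (interp A r (S' # b'))"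
        using Mu.prems by (intro Mu.IH[OF pA]) (auto simp: nth_Cons split: nat.splits)
      show "agree (Suc n) (interp A r (S # b)) (interp A r (S' # b'))"
        using 1 2 agree_trans by blast
    qed
  qed
qed simp

lemma contractive_mu: "proper 0 A \<Longrightarrow> contractive (\<lambda>S. interp A r [S])"
  unfolding contractive_def by (auto intro: interp_contr)



lemma contractive_gen: "proper 0 A \<Longrightarrow> contractive (\<lambda>S. interp A r (S # b))"
  unfolding contractive_def by (auto intro: interp_contr)

definition good :: "sem \<Rightarrow> bool" where
  "good S \<longleftrightarrow> (\<forall>n. S (Suc n) \<subseteq> S n) \<and> (\<forall>n M M'. beta M M' \<longrightarrow> M' \<in> S n \<longrightarrow> M \<in> S n)"

lemma good_dc: "good S \<Longrightarrow> m \<le> n \<Longrightarrow> S n \<subseteq> S m"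
proof (induction n)
  case (Suc n)
  show ?case
  proof (cases "m = Suc n")
    case False
    then have "m \<le> n" using Suc.prems by simp
    then show ?thesis using Suc unfolding good_def by blast
  qed simp
qed simp

lemma good_UU: "good UU" by (simp add: good_def UU_def)

lemma good_latS: "good S \<Longrightarrow> good (latS S)"
  unfolding good_def latS_def by (auto split: nat.splits)

lemma good_arrS: assumes "good T" shows "good (arrS S T)"
  unfolding good_def
proof (intro conjI allI impI)
  fix n show "arrS S T (Suc n) \<subseteq> arrS S T n" unfolding arrS_def by auto
next
  fix n M M' assume b: "beta M M'" and m: "M' \<in> arrS S T n"
  have "App M N \<in> T k" if "k \<le> n" "N \<in> S k" for k N
  proof -
    have "App M' N \<in> T k" using m that unfolding arrS_def by blast
    moreover have "beta (App M N) (App M' N)" using b by (rule beta.intros(2))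
    ultimately show ?thesis using assms unfolding good_def by blast
  qed
  then show "M \<in> arrS S T n" unfolding arrS_def by blast
qed

lemma good_fixp:
  assumes c: "contractive F" and g: "\<And>S. good S \<Longrightarrow> good (F S)"
  shows "good (fixp F)"
proof -
  have gi: "good ((F ^^ j) UU)" for j by (induction j) (simp_all add: good_UU g)
  have dc: "fixp F (Suc n) \<subseteq> fixp F n" for n
  proof -
    have "fixp F (Suc n) = (F ^^ Suc (Suc n)) UU (Suc n)" by (simp add: fixp_def)
    also have "\<dots> \<subseteq> (F ^^ Suc (Suc n)) UU n" using gi unfolding good_def by blast
    also have "\<dots> = (F ^^ Suc n) UU n"
      using it_agree[OF c, of "Suc n" 1] unfolding agree_def by simp
    finally show ?thesis by (simp add: fixp_def)
  qed
  show ?thesis unfolding good_def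
    using dc gi unfolding good_def fixp_def by blast
qed

lemma good_interp:
  "texk (length b) A \<Longrightarrow> (\<And>X. good (r X)) \<Longrightarrow> (\<And>i. i < length b \<Longrightarrow> good (b ! i)) \<Longrightarrow>
   good (interp A r b)"
proof (induction A arbitrary: b)
  case (TB i) then show ?case by (auto elim: texk_TB)
next
  case (Arr A B) then show ?case by (auto elim!: texk_Arr intro: good_arrS)
next
  case (Lat A) then show ?case by (auto elim!: texk_Lat intro: good_latS)
next
  case (Mu A)
  from Mu.prems(1) have t: "texk (Suc (length b)) A" and p: "proper 0 A" by (auto elim: texk_Mu)
  show ?case unfolding interp.simps
  proof (rule good_fixp[OF contractive_gen[OF p]])
    fix S assume "good S"
    then show "good (interp A r (S # b))"
      using t Mu.prems by (intro Mu.IH) (auto simp: nth_Cons split: nat.splits)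
  qed
qed simp

lemma interp_closed:
  "texk (length b) U \<Longrightarrow> interp U r (b @ c) = interp U r b"
proof (induction U arbitrary: b)
  case (TB i) then show ?case by (auto elim!: texk_TB simp: nth_append)
next
  case (Arr A B) then show ?case by (auto elim!: texk_Arr)
next
  case (Lat A) then show ?case by (auto elim!: texk_Lat)
next
  case (Mu A)
  from Mu.prems have t: "texk (Suc (length b)) A" by (auto elim: texk_Mu)
  have "interp A r (S # b @ c) = interp A r (S # b)" for S
    using Mu.IH[of "S # b"] t by simp
  then show ?case by simp
qed simp

lemma interp_open:
  "texk 0 U \<Longrightarrow> length b = k \<Longrightarrow> interp (open_rec k U A) r b = interp A r (b @ [interp U r []])"
proof (induction A arbitrary: k b)
  case (TB i)
  show ?case
  proof (cases "i = k")
    case True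
    have "interp U r ([] @ b) = interp U r []" using TB.prems(1) by (intro interp_closed) simp
    then show ?thesis using True TB.prems by (simp add: nth_append)
  next
    case False
    then show ?thesis using TB.prems by (auto simp: nth_append)
  qed
next
  case (Mu A)
  have "interp (open_rec (Suc k) U A) r (S # b) = interp A r ((S # b) @ [interp U r []])" for S
    using Mu.prems by (intro Mu.IH) auto
  then show ?case by simp
qed auto

lemma interp_open0: "texk 0 U \<Longrightarrow> interp (open_ty A U) r [] = interp A r [interp U r []]"
  using interp_open[of U "[]" 0 A r] by (simp add: open_ty_def)

lemma interp_fv: "X \<notin> fv A \<Longrightarrow> interp A (r(X := S)) b = interp A r b"
  by (induction A arbitrary: b) auto

lemma fv_open: "fv A \<subseteq> fv (open_rec k U A)"
  by (induction A arbitrary: k) auto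

lemma dist_sem: "latS (arrS S T) = arrS (latS S) (latS T)"
proof
  fix n show "latS (arrS S T) n = arrS (latS S) (latS T) n"
  proof (cases n)
    case 0 then show ?thesis by (auto simp: latS_def arrS_def)
  next
    case (Suc m)
    have "(\<forall>k\<le>Suc m. \<forall>N\<in>latS S k. App M N \<in> latS T k) \<longleftrightarrow> (\<forall>k\<le>m. \<forall>N\<in>S k. App M N \<in> T k)" for M
    proof
      assume a: "\<forall>k\<le>Suc m. \<forall>N\<in>latS S k. App M N \<in> latS T k"
      show "\<forall>k\<le>m. \<forall>N\<in>S k. App M N \<in> T k"
      proof (intro allI impI ballI)
        fix k N assume "k \<le> m" "N \<in> S k"
        then show "App M N \<in> T k" using a[rule_format, of "Suc k" N] by (simp add: latS_def)
      qed
    next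
      assume a: "\<forall>k\<le>m. \<forall>N\<in>S k. App M N \<in> T k"
      show "\<forall>k\<le>Suc m. \<forall>N\<in>latS S k. App M N \<in> latS T k"
      proof (intro allI impI ballI)
        fix k N assume "k \<le> Suc m" "N \<in> latS S k"
        then show "App M N \<in> latS T k" using a by (cases k) (auto simp: latS_def)
      qed
    qed
    then show ?thesis using Suc by (simp add: latS_def arrS_def)
  qed
qed

lemma teq_sound: "teq e A B \<Longrightarrow> interp A r [] = interp B r []"
proof (induction arbitrary: r rule: teq.induct)
  case (arr_top A) then show ?case by (simp add: interp_top)
next
  case (unfold A)
  from unfold have t: "texk 1 A" and p: "proper 0 A" by (auto simp: texp_def elim: texk_Mu)
  have "interp (open_ty A (Mu A)) r [] = interp A r [interp (Mu A) r []]"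
    using unfold by (intro interp_open0) (simp add: texp_def)
  also have "\<dots> = interp (Mu A) r []"
    using fixp_eq[OF contractive_gen[OF p, of r "[]"]] by simp
  finally show ?case by simp
next
  case (fixpt A C)
  from fixpt have p: "proper 0 C" by (auto simp: texp_def elim: texk_Mu)
  have "texk 0 A" using fixpt(1) by (simp add: texp_def)
  have "interp A r [] = interp (open_ty C A) r []" by (rule fixpt.IH)
  also have "\<dots> = interp C r [interp A r []]" by (rule interp_open0) fact
  finally have "interp A r [] = interp C r [interp A r []]" .
  then have "interp A r [] = fixp (\<lambda>S. interp C r [S])"
    using fixp_unique[OF contractive_gen[OF p, of r "[]"], of "interp A r []"] by metis
  then show ?case by simp
next
  case (dist A B) then show ?case by (simp add: dist_sem)
next
  case (refl A) show ?case by (rule HOL.refl)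
next
  case (sym A B) then show ?case by metis
next
  case (trans A B C) then show ?case by (metis HOL.trans)
next
  case (lat A B) then show ?case by (metis interp.simps(4))
next
  case (arr A C B D) then show ?case by (metis interp.simps(3))
qed

lemma arrS_mono:
  assumes a: "\<And>k. S' k \<subseteq> S k" and b: "\<And>k. T k \<subseteq> T' k"
  shows "arrS S T n \<subseteq> arrS S' T' n"
proof
  fix M assume M: "M \<in> arrS S T n"
  have "App M N \<in> T' k" if "k \<le> n" "N \<in> S' k" for k N
  proof -
    have "N \<in> S k" using a[of k] that(2) by (rule subsetD)
    then have "App M N \<in> T k" using M that(1) unfolding arrS_def by blast
    then show ?thesis using b[of k] by blast
  qed
  then show "M \<in> arrS S' T' n" unfolding arrS_def by blast
qed

lemma latS_mono: assumes "\<And>k. S k \<subseteq> S' k" shows "latS S n \<subseteq> latS S' n"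
proof (cases n)
  case (Suc m) then show ?thesis using assms[of m] by (simp add: latS_def)
qed (simp add: latS_def)



lemma sub_sound:
  "sub g A B \<Longrightarrow> (\<And>X. good (r X)) \<Longrightarrow> (\<forall>p\<in>g. \<forall>m. r (fst p) m \<subseteq> r (snd p) m) \<Longrightarrow>
   interp A r [] n \<subseteq> interp B r [] n"
proof (induction arbitrary: r n rule: sub.induct)
  case (hyp g X Y) then show ?case by auto
next
  case (top g A) then show ?case by (simp add: interp_top UU_def)
next
  case (eq g A B) then show ?case using teq_sound by (metis order_refl)
next
  case (trans g1 A B g2 C)
  have "interp A r [] n \<subseteq> interp B r [] n" using trans.prems by (intro trans.IH(1)) auto
  also have "\<dots> \<subseteq> interp C r [] n" using trans.prems by (intro trans.IH(2)) auto
  finally show ?case .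
next
  case (lat g A B)
  have "\<And>k. interp A r [] k \<subseteq> interp B r [] k" using lat.prems by (intro lat.IH) auto
  then show ?case by (simp add: latS_mono)
next
  case (arr g1 A' A g2 B B')
  have "\<And>k. interp A' r [] k \<subseteq> interp A r [] k" using arr.prems by (intro arr.IH(1)) auto
  moreover have "\<And>k. interp B r [] k \<subseteq> interp B' r [] k" using arr.prems by (intro arr.IH(2)) auto
  ultimately show ?case by (simp add: arrS_mono)
next
  case (later g A)
  have "good (interp A r [])" using later.hyps(2) later.prems(1)
    by (intro good_interp) (auto simp: texp_def)
  then show ?case by (cases n) (auto simp: latS_def good_def)
next
  case (mu g X Y A B)
  have XY: "X \<noteq> Y" using mu.hyps(2) unfolding wf_assm_def by auto
  have "texp (open_ty A (TV X))" "texp (open_ty B (TV Y))" using sub_texp[OF mu.hyps(1)] by auto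
  then have tA: "texk 1 A" and tB: "texk 1 B"
    using texk_open2[of 0 X A] texk_open2[of 0 Y B] by (auto simp: texp_def open_ty_def)
  have pA: "proper 0 A" and pB: "proper 0 B" using mu.hyps by auto
  define S where "S = interp (Mu A) r []"
  define T where "T = interp (Mu B) r []"
  have gS: "good S" unfolding S_def using tA pA mu.prems(1)
    by (intro good_interp) (auto intro: texk.intros)
  have gT: "good T" unfolding T_def using tB pB mu.prems(1)
    by (intro good_interp) (auto intro: texk.intros)
  have fS: "interp A r [S] = S" unfolding S_def interp.simps
    using fixp_eq[OF contractive_gen[OF pA, of r "[]"]] by simp
  have fT: "interp B r [T] = T" unfolding T_def interp.simps
    using fixp_eq[OF contractive_gen[OF pB, of r "[]"]] by simp
  have XA: "X \<notin> fv A" using mu.hyps(3) by simp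
  have YA: "Y \<notin> fv A" using mu.hyps(6) fv_open[of A 0 "TV X"] by (auto simp: open_ty_def)
  have YB: "Y \<notin> fv B" using mu.hyps(4) by simp
  have XB: "X \<notin> fv B" using mu.hyps(5) fv_open[of B 0 "TV Y"] by (auto simp: open_ty_def)
  have XG: "X \<notin> FTV g" "Y \<notin> FTV g" using mu.hyps(5,6) by auto
  have main: "S m \<subseteq> T m" for m
  proof (induction m rule: less_induct)
    case (less m)
    define S' where "S' = (\<lambda>k. if k < m then S k else {})"
    define r' where "r' = r(X := S', Y := T)"
    have gS': "good S'" unfolding good_def
    proof (intro conjI allI impI)
      fix k show "S' (Suc k) \<subseteq> S' k" using gS unfolding S'_def good_def by auto
    next
      fix k M M' assume "beta M M'" "M' \<in> S' k"
      then show "M \<in> S' k" using gS unfolding S'_def good_def by (auto split: if_splits)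
    qed
    have gr': "good (r' Z)" for Z using gS' gT mu.prems(1) unfolding r'_def by auto
    have asm: "\<forall>p\<in>g \<union> {(X, Y)}. \<forall>k. r' (fst p) k \<subseteq> r' (snd p) k"
    proof (intro ballI allI)
      fix p k assume p: "p \<in> g \<union> {(X, Y)}"
      show "r' (fst p) k \<subseteq> r' (snd p) k"
      proof (cases "p = (X, Y)")
        case True
        then show ?thesis using XY less.IH unfolding r'_def S'_def by auto
      next
        case False
        then have "p \<in> g" using p by auto
        then have "fst p \<notin> {X, Y}" "snd p \<notin> {X, Y}" using XG unfolding FTV_def by force+
        then show ?thesis using mu.prems(2) \<open>p \<in> g\<close> unfolding r'_def by auto
      qed
    qed
    have sub': "interp (open_ty A (TV X)) r' [] m \<subseteq> interp (open_ty B (TV Y)) r' [] m"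
      using gr' asm by (intro mu.IH) auto
    have "interp (open_ty A (TV X)) r' [] = interp A r' [S']"
      using XY by (simp add: interp_open0 texk.intros r'_def)
    also have "\<dots> = interp A r [S']" unfolding r'_def using XA YA by (simp add: interp_fv)
    finally have L: "interp (open_ty A (TV X)) r' [] m = interp A r [S'] m" by simp
    have "agree m S' S" unfolding agree_def S'_def by simp
    then have "agree (Suc m) (interp A r [S']) (interp A r [S])"
      using contractive_gen[OF pA, of r "[]"] unfolding contractive_def by blast
    then have "interp A r [S'] m = S m" using fS unfolding agree_def by auto
    have "interp (open_ty B (TV Y)) r' [] = interp B r' [T]"
      by (simp add: interp_open0 texk.intros r'_def)
    also have "\<dots> = interp B r [T]" unfolding r'_def using XB YB by (simp add: interp_fv)
    finally have R: "interp (open_ty B (TV Y)) r' [] m = T m" using fT by simp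
    show ?case using sub' L R \<open>interp A r [S'] m = S m\<close> by simp
  qed
  show ?case using main unfolding S_def T_def .
qed

lemma typing_sound:
  "typing G M A \<Longrightarrow> (\<And>X. good (r X)) \<Longrightarrow> (\<forall>x B. G x = Some B \<longrightarrow> s x \<in> interp B r [] n) \<Longrightarrow>
   psubst s M \<in> interp A r [] n"
proof (induction arbitrary: s n rule: typing.induct)
  case (var G x A) then show ?case by simp
next
  case (shift G M A)
  have "\<forall>x B. ctx_later G x = Some B \<longrightarrow> s x \<in> interp B r [] (Suc n)"
    using shift.prems(2) by (auto simp: ctx_later_def latS_def)
  then have "psubst s M \<in> interp (Lat A) r [] (Suc n)" using shift.prems(1) by (intro shift.IH) auto
  then show ?case by (simp add: latS_def)
next
  case (top G M) then show ?case by (simp add: interp_top UU_def)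
next
  case (sub G M A B)
  have "psubst s M \<in> interp A r [] n" using sub.prems by (intro sub.IH) auto
  moreover have "interp A r [] n \<subseteq> interp B r [] n"
    using sub.hyps(2) sub.prems(1) unfolding subtype_def by (intro sub_sound) auto
  ultimately show ?case by blast
next
  case (arrI A G M B)
  have tx: "ctx_ok (ctx_ext A G) \<and> texp B" using typing_texp[OF arrI.hyps] .
  have gB: "good (interp B r [])" using tx arrI.prems(1) by (intro good_interp) (auto simp: texp_def)
  have "App (Lam (psubst (up s) M)) N \<in> interp B r [] k" if k: "k \<le> n" and N: "N \<in> interp A r [] k" for k N
  proof -
    have "\<forall>x B'. ctx_ext A G x = Some B' \<longrightarrow> scons N s x \<in> interp B' r [] k"
    proof (intro allI impI)
      fix x B' assume e: "ctx_ext A G x = Some B'"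
      show "scons N s x \<in> interp B' r [] k"
      proof (cases x)
        case 0 then show ?thesis using e N by (simp add: ctx_ext_def scons_def)
      next
        case (Suc y)
        then have Gy: "G y = Some B'" using e by (simp add: ctx_ext_def)
        have "B' \<in> ran (ctx_ext A G)" using e by (auto simp: ran_def)
        then have "texp B'" using tx by (auto simp: ctx_ok_def)
        then have "good (interp B' r [])" using arrI.prems(1) by (intro good_interp) (auto simp: texp_def)
        then have "interp B' r [] n \<subseteq> interp B' r [] k" using k by (rule good_dc)
        moreover have "s y \<in> interp B' r [] n" using arrI.prems(2) Gy by blast
        ultimately show ?thesis using Suc by (auto simp: scons_def)
      qed
    qed
    then have "psubst (scons N s) M \<in> interp B r [] k" using arrI.prems(1) by (intro arrI.IH) auto
    then have "subst (psubst (up s) M) N 0 \<in> interp B r [] k" by (simp add: subst_up)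
    moreover have "beta (App (Lam (psubst (up s) M)) N) (subst (psubst (up s) M) N 0)"
      by (rule beta.intros(1))
    ultimately show ?thesis using gB unfolding good_def by blast
  qed
  then show ?case by (simp add: arrS_def)
next
  case (arrE G1 M A B G2 N)
  have s1: "\<forall>x B'. G1 x = Some B' \<longrightarrow> s x \<in> interp B' r [] n"
  proof (intro allI impI)
    fix x B' assume e: "G1 x = Some B'"
    have "(G1 ++ G2) x = Some B'"
    proof (cases "G2 x")
      case None then show ?thesis using e by (simp add: map_add_def)
    next
      case (Some a)
      then have "x \<in> dom G1 \<inter> dom G2" using e by auto
      then have "G1 x = G2 x" using arrE.hyps(3) unfolding compat_def by blast
      then show ?thesis using Some e by (simp add: map_add_def)
    qed
    then show "s x \<in> interp B' r [] n" using arrE.prems(2) by simp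
  qed
  have s2: "\<forall>x B'. G2 x = Some B' \<longrightarrow> s x \<in> interp B' r [] n"
  proof (intro allI impI)
    fix x B' assume e: "G2 x = Some B'"
    then have "(G1 ++ G2) x = Some B'" by (simp add: map_add_def)
    then show "s x \<in> interp B' r [] n" using arrE.prems(2) by simp
  qed
  have "psubst s M \<in> arrS (interp A r []) (interp B r []) n"
    using arrE.IH(1)[OF arrE.prems(1) s1] by simp
  moreover have "psubst s N \<in> interp A r [] n" using arrE.IH(2)[OF arrE.prems(1) s2] .
  ultimately show ?case by (auto simp: arrS_def)
qed

lemma bf_indep:
  "proper k A \<Longrightarrow> bullet_free A \<Longrightarrow> k < length b \<Longrightarrow> interp A r (b[k := S]) = interp A r b"
proof (induction A arbitrary: k b)
  case (TB i) then show ?case by auto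
next
  case (Arr A B)
  then have "proper k A" "proper k B" using bf_not_tv by auto
  then show ?case using Arr by simp
next
  case (Mu A)
  have "\<not> top_variant (Mu A)" using Mu.prems(2) bf_not_tv by blast
  then have p: "proper (Suc k) A" using Mu.prems(1) by simp
  have "interp A r (S' # b[k := S]) = interp A r (S' # b)" for S'
    using Mu.IH[OF p, of "S' # b"] Mu.prems by simp
  then show ?case by simp
qed auto

definition WW :: "nat \<Rightarrow> sem" where "WW = (\<lambda>_ _. {t. WN t})"

lemma bf_sem:
  "bullet_free A \<Longrightarrow> texk (length b) A \<Longrightarrow>
   (\<And>i m. i < length b \<Longrightarrow> {t. NEU t} \<subseteq> (b ! i) m \<and> (b ! i) m \<subseteq> {t. WN t}) \<Longrightarrow>
   {t. NEU t} \<subseteq> interp A WW b n \<and> interp A WW b n \<subseteq> {t. WN t}"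
proof (induction A arbitrary: b n)
  case (TV X) then show ?case by (auto simp: WW_def NEU_WN)
next
  case (TB i) then show ?case by (auto elim!: texk_TB)
next
  case (Arr A B)
  from Arr.prems(2) have tA: "texk (length b) A" and tB: "texk (length b) B" by (auto elim: texk_Arr)
  have IA: "\<And>m. {t. NEU t} \<subseteq> interp A WW b m \<and> interp A WW b m \<subseteq> {t. WN t}"
    using Arr.prems tA by (intro Arr.IH(1)) auto
  have IB: "\<And>m. {t. NEU t} \<subseteq> interp B WW b m \<and> interp B WW b m \<subseteq> {t. WN t}"
    using Arr.prems tB by (intro Arr.IH(2)) auto
  have lo: "{t. NEU t} \<subseteq> interp (Arr A B) WW b n"
  proof
    fix t assume t: "t \<in> {t. NEU t}"
    have "App t N \<in> interp B WW b k" if "N \<in> interp A WW b k" for k N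
    proof -
      have "WN N" using IA that by blast
      then have "NEU (App t N)" using t by (auto intro: NEU.intros)
      then show ?thesis using IB by blast
    qed
    then show "t \<in> interp (Arr A B) WW b n" by (simp add: arrS_def)
  qed
  have hi: "interp (Arr A B) WW b n \<subseteq> {t. WN t}"
  proof
    fix M assume M: "M \<in> interp (Arr A B) WW b n"
    obtain x where x: "x \<notin> fvs M" using ex_new_if_finite[OF infinite_UNIV_nat finite_fvs] by blast
    have "Var x \<in> interp A WW b n" using IA by (auto intro: NEU.intros)
    then have "App M (Var x) \<in> interp B WW b n" using M by (auto simp: arrS_def)
    then have "WN (App M (Var x))" using IB by blast
    then show "M \<in> {t. WN t}" using WN_fresh x by blast
  qed
  show ?case using lo hi by blast
next
  case (Lat A) then show ?case by simp
next
  case (Mu A)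
  from Mu.prems(2) have t: "texk (Suc (length b)) A" and p: "proper 0 A" by (auto elim: texk_Mu)
  define W :: sem where "W = (\<lambda>_. {t. WN t})"
  have c: "interp A WW (S # b) = interp A WW (W # b)" for S
    using bf_indep[OF p, of "W # b" WW S] Mu.prems(1) by simp
  have "interp (Mu A) WW b = interp A WW (W # b)"
    using fixp_const[of "\<lambda>S. interp A WW (S # b)" W] c by simp
  moreover have "{t. NEU t} \<subseteq> interp A WW (W # b) n \<and> interp A WW (W # b) n \<subseteq> {t. WN t}"
    using Mu.prems t by (intro Mu.IH) (auto simp: W_def nth_Cons NEU_WN split: nat.splits)
  ultimately show ?case by simp
qed

theorem theorem8:
  assumes "typing G M A"
    and "\<forall>B\<in>ran G. bullet_free B"
    and "bullet_free A"
  shows "beta_normalizable M"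
proof -
  have tx: "ctx_ok G" "texp A" using typing_texp[OF assms(1)] by auto
  have gW: "good (WW X)" for X unfolding good_def WW_def using WN_exp by blast
  have "\<forall>x B. G x = Some B \<longrightarrow> Var x \<in> interp B WW [] 0"
  proof (intro allI impI)
    fix x B assume e: "G x = Some B"
    then have "B \<in> ran G" by (auto simp: ran_def)
    then have "bullet_free B" "texp B" using assms(2) tx(1) by (auto simp: ctx_ok_def)
    then have "{t. NEU t} \<subseteq> interp B WW [] 0" using bf_sem[of B "[]"] by (simp add: texp_def)
    then show "Var x \<in> interp B WW [] 0" by (auto intro: NEU.intros)
  qed
  then have "psubst Var M \<in> interp A WW [] 0" using gW by (intro typing_sound[OF assms(1)]) auto
  moreover have "interp A WW [] 0 \<subseteq> {t. WN t}"
    using bf_sem[of A "[]"] assms(3) tx(2) by (simp add: texp_def)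
  ultimately show ?thesis by (auto simp: psubst_Var)
qed


end
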